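(* Let $\varepsilon>0$, $b>0$, $r_c\ge 0$ with $r_c<b$, and $\omega>0$. Consider the matrix $$A=\begin{pmatrix} 0 & \omega^2 & 0 \\ -\omega^2 - \varepsilon \frac{r_c^2 - b^2}{(b^2 + r_c^2)^2} & 0 & 0\\ 0 & -\frac{\varepsilon b}{b^2 + r_c^2} & 0 \end{pmatrix},$$ which governs the linearized growth rates $\mu$ of perturbations $\delta e^{\mu t}(\alpha\cos\omega s,\beta\cos\omega s,\gamma\sin\omega s)$ of the straight-line solution $\mathbf{X}(s,t)=b\mathbf{e}_1 - \varepsilon\frac{b}{b^2+r_c^2} t\,\mathbf{e}_2 + s\mathbf{e}_3$ of the equation $\mathbf{X}_t = \frac{\mathbf{X}_s \wedge \mathbf{X}_{ss}}{|\mathbf{X}_s|^3} - \frac{\varepsilon x_1}{x_1^2 + r_c^2} \frac{\mathbf{X}_s\wedge \mathbf{e}_1 }{|\mathbf{X}_s|}$. Then $A$ has an eigenvalue with positive real part if and only if $$\omega < \frac{\sqrt{\varepsilon (b^2 - r_c^2)}}{b^2 + r_c^2},$$ equivalently, the wavelength $\lambda=2\pi/\omega$ satisfies $\lambda > \frac{2 \pi b}{\sqrt{\varepsilon}}\,\frac{1 + (r_c / b)^2}{\sqrt{1 - (r_c / b)^2}}$.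
   Context: $\mathbf{e}_1,\mathbf{e}_2,\mathbf{e}_3$ is the standard basis of $\mathbb{R}^3$, $\wedge$ is the cross product, $x_1$ is the first component of $\mathbf{X}$. Instability of the straight-line pair means some eigenvalue of $A$ has positive real part. *)

theory Defs
  imports Complex_Main "Jordan_Normal_Form.Char_Poly"
begin

text \<open>The 3x3 linearization matrix A (real entries, viewed as a complex matrix
so that complex eigenvalues are allowed).\<close>
definition linA :: "real \<Rightarrow> real \<Rightarrow> real \<Rightarrow> real \<Rightarrow> complex mat" where
  "linA \<epsilon> b rc \<omega> = mat_of_rows_list 3
     [[0, complex_of_real (\<omega>\<^sup>2), 0],
      [complex_of_real (- \<omega>\<^sup>2 - \<epsilon> * (rc\<^sup>2 - b\<^sup>2) / (b\<^sup>2 + rc\<^sup>2)\<^sup>2), 0, 0],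
      [0, complex_of_real (- \<epsilon> * b / (b\<^sup>2 + rc\<^sup>2)), 0]]"

end

theory Submission imports Defs begin
lemma mulv: fixes p q d :: complex assumes "v \<in> carrier_vec 3"
 shows "mat_of_rows_list 3 [[0,p,0],[q,0,0],[0,d,0]] *\<^sub>v v = vec 3 (\<lambda>i. if i = 0 then p * v$1 else if i = 1 then q * v$0 else d * v$1)"
  using assms
  by (auto simp: mat_of_rows_list_def mult_mat_vec_def scalar_prod_def numeral_3_eq_3 lessThan_Suc row_def)

lemma dimr[simp]: "dim_row (mat_of_rows_list 3 [[a,b,c],[e,f,g],[h,i,j]]) = 3"
  by (simp add: mat_of_rows_list_def)

lemma ev1: fixes p q d :: complex
  assumes "eigenvalue (mat_of_rows_list 3 [[0,p,0],[q,0,0],[0,d,0]]) \<mu>"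
  shows "\<mu> = 0 \<or> \<mu>^2 = p*q"
proof -
  obtain v where v: "v \<in> carrier_vec 3" "v \<noteq> 0\<^sub>v 3"
     "mat_of_rows_list 3 [[0,p,0],[q,0,0],[0,d,0]] *\<^sub>v v = \<mu> \<cdot>\<^sub>v v"
    using assms unfolding eigenvalue_def eigenvector_def by auto
  have e: "vec 3 (\<lambda>i. if i = 0 then p * v$1 else if i = 1 then q * v$0 else d * v$1) = \<mu> \<cdot>\<^sub>v v"
    using v(3) mulv[OF v(1)] by simp
  have dv: "dim_vec v = 3" using v(1) by simp
  have e0: "p * v$1 = \<mu> * v$0" using arg_cong[OF e, of "\<lambda>x. x$0"] dv by simp
  have e1: "q * v$0 = \<mu> * v$1" using arg_cong[OF e, of "\<lambda>x. x$1"] dv by simp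
  have e2: "d * v$1 = \<mu> * v$2" using arg_cong[OF e, of "\<lambda>x. x$2"] dv by simp
  have nz: "v$0 \<noteq> 0 \<or> v$1 \<noteq> 0 \<or> v$2 \<noteq> 0"
  proof (rule ccontr)
    assume a: "\<not> (v$0 \<noteq> 0 \<or> v$1 \<noteq> 0 \<or> v$2 \<noteq> 0)"
    have "v = 0\<^sub>v 3"
    proof (rule eq_vecI)
      fix i assume "i < dim_vec (0\<^sub>v 3 :: complex vec)"
      hence "i = 0 \<or> i = 1 \<or> i = 2" by auto
      thus "v $ i = 0\<^sub>v 3 $ i" using a by auto
    qed (simp add: dv)
    thus False using v(2) by simp
  qed
  show ?thesis
  proof (cases "v$0 = 0 \<and> v$1 = 0")
    case True
    hence "\<mu> * v$2 = 0" using e2 by simp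
    thus ?thesis using True nz by simp
  next
    case False
    have "\<mu>^2 * v$0 = \<mu> * (\<mu> * v$0)" by (simp add: power2_eq_square)
    also have "\<dots> = \<mu> * (p * v$1)" using e0 by simp
    also have "\<dots> = p * (\<mu> * v$1)" by (metis mult.left_commute)
    also have "\<dots> = p * (q * v$0)" using e1 by simp
    finally have a: "\<mu>^2 * v$0 = (p*q) * v$0" by (metis mult.assoc)
    have "\<mu>^2 * v$1 = \<mu> * (\<mu> * v$1)" by (simp add: power2_eq_square)
    also have "\<dots> = \<mu> * (q * v$0)" using e1 by simp
    also have "\<dots> = q * (\<mu> * v$0)" by (metis mult.left_commute)
    also have "\<dots> = q * (p * v$1)" using e0 by simp
    finally have b: "\<mu>^2 * v$1 = (p*q) * v$1" by (metis mult.assoc mult.commute)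
    show ?thesis using False a b by auto
  qed
qed

lemma ev2: fixes p q d m :: complex
  assumes "m^2 = p*q"
  shows "eigenvalue (mat_of_rows_list 3 [[0,p,0],[q,0,0],[0,d,0]]) m"
proof -
  define v :: "complex vec" where "v = (if p = 0 then vec 3 (\<lambda>i. if i = 2 then 1 else 0)
     else vec 3 (\<lambda>i. if i = 0 then p else if i = 1 then m else d))"
  have vc: "v \<in> carrier_vec 3" unfolding v_def by auto
  have v0: "v$0 = (if p = 0 then 0 else p)" "v$1 = (if p = 0 then 0 else m)"
     "v$2 = (if p = 0 then 1 else d)" unfolding v_def by auto
  have nz: "v \<noteq> 0\<^sub>v 3"
  proof
    assume "v = 0\<^sub>v 3"
    hence "v$0 = 0" "v$2 = 0" by auto
    thus False using v0 by (auto split: if_splits)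
  qed
  have m0: "p = 0 \<Longrightarrow> m = 0" using assms by simp
  have eq: "mat_of_rows_list 3 [[0,p,0],[q,0,0],[0,d,0]] *\<^sub>v v = m \<cdot>\<^sub>v v"
    unfolding mulv[OF vc]
  proof (rule eq_vecI)
    fix i assume "i < dim_vec (m \<cdot>\<^sub>v v)"
    hence i: "i = 0 \<or> i = 1 \<or> i = 2" using vc by auto
    show "vec 3 (\<lambda>i. if i = 0 then p * v$1 else if i = 1 then q * v$0 else d * v$1) $ i = (m \<cdot>\<^sub>v v) $ i"
    proof (cases "p = 0")
      case True
      then show ?thesis using i vc v0 m0 by auto
    next
      case False
      have "q * p = m * m" using assms by (simp add: power2_eq_square mult.commute)
      then show ?thesis using i vc v0 False by (auto simp: mult.commute)
    qed
  qed (use vc in auto)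
  show ?thesis unfolding eigenvalue_def eigenvector_def using vc nz eq by auto
qed
theorem mainTheorem2:
  fixes \<epsilon> b rc \<omega> :: real
  assumes "\<epsilon> > 0" and "b > 0" and "rc \<ge> 0" and "rc < b" and "\<omega> > 0"
  shows "((\<exists>\<mu>. eigenvalue (linA \<epsilon> b rc \<omega>) \<mu> \<and> Re \<mu> > 0)
           \<longleftrightarrow> \<omega> < sqrt (\<epsilon> * (b\<^sup>2 - rc\<^sup>2)) / (b\<^sup>2 + rc\<^sup>2))
       \<and> (\<omega> < sqrt (\<epsilon> * (b\<^sup>2 - rc\<^sup>2)) / (b\<^sup>2 + rc\<^sup>2)
           \<longleftrightarrow> 2 * pi / \<omega> > 2 * pi * b / sqrt \<epsilon> * (1 + (rc / b)\<^sup>2) / sqrt (1 - (rc / b)\<^sup>2))"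
proof -
  define S where "S = b\<^sup>2 + rc\<^sup>2"
  define K where "K = \<epsilon> * (b\<^sup>2 - rc\<^sup>2) / S\<^sup>2"
  define X where "X = sqrt (\<epsilon> * (b\<^sup>2 - rc\<^sup>2)) / S"
  define r where "r = \<omega>\<^sup>2 * (K - \<omega>\<^sup>2)"
  have Sp: "S > 0" unfolding S_def using assms by (simp add: add_pos_nonneg)
  have bd: "b\<^sup>2 - rc\<^sup>2 > 0" using assms by (simp add: power_strict_mono)
  have Kp: "K > 0" unfolding K_def using assms bd Sp by simp
  have XK: "X = sqrt K" unfolding X_def K_def using Sp by (simp add: real_sqrt_divide)
  have Xp: "X > 0" using XK Kp by simp
  have rX: "r > 0 \<longleftrightarrow> \<omega> < X"
  proof -
    have "r > 0 \<longleftrightarrow> \<omega>\<^sup>2 < K" unfolding r_def using assms(5) by (simp add: zero_less_mult_iff)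
    also have "\<dots> \<longleftrightarrow> \<omega> < sqrt K" using assms(5) Kp
      by (metis abs_of_pos real_sqrt_abs real_sqrt_less_iff)
    finally show ?thesis using XK by simp
  qed
  have A: "linA \<epsilon> b rc \<omega> = mat_of_rows_list 3 [[0, complex_of_real (\<omega>\<^sup>2), 0],
      [complex_of_real (K - \<omega>\<^sup>2), 0, 0], [0, complex_of_real (- \<epsilon> * b / (b\<^sup>2 + rc\<^sup>2)), 0]]"
  proof -
    have "- \<omega>\<^sup>2 - \<epsilon> * (rc\<^sup>2 - b\<^sup>2) / (b\<^sup>2 + rc\<^sup>2)\<^sup>2 = K - \<omega>\<^sup>2"
      unfolding K_def S_def by (simp add: diff_divide_distrib right_diff_distrib)
    hence h: "complex_of_real (- \<omega>\<^sup>2 - \<epsilon> * (rc\<^sup>2 - b\<^sup>2) / (b\<^sup>2 + rc\<^sup>2)\<^sup>2) = complex_of_real (K - \<omega>\<^sup>2)"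
      by (rule arg_cong)
    show ?thesis unfolding linA_def by (simp only: h)
  qed
  have pq: "complex_of_real (\<omega>\<^sup>2) * complex_of_real (K - \<omega>\<^sup>2) = complex_of_real r"
    unfolding r_def by simp
  have part1: "(\<exists>\<mu>. eigenvalue (linA \<epsilon> b rc \<omega>) \<mu> \<and> Re \<mu> > 0) \<longleftrightarrow> r > 0"
  proof
    assume "\<exists>\<mu>. eigenvalue (linA \<epsilon> b rc \<omega>) \<mu> \<and> Re \<mu> > 0"
    then obtain \<mu> where m: "eigenvalue (linA \<epsilon> b rc \<omega>) \<mu>" "Re \<mu> > 0" by blast
    have "\<mu> \<noteq> 0" using m(2) by auto
    hence sq: "\<mu>^2 = complex_of_real r" using ev1[OF m(1)[unfolded A]] pq by simp
    hence "Im (\<mu>^2) = 0" by simp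
    hence "2 * Re \<mu> * Im \<mu> = 0" by (auto simp: power2_eq_square)
    hence "Im \<mu> = 0" using m(2) by simp
    hence "Re (\<mu>^2) = (Re \<mu>)^2" by (simp add: power2_eq_square)
    hence "r = (Re \<mu>)^2" using sq by simp
    thus "r > 0" using m(2) by simp
  next
    assume rp: "r > 0"
    have "(complex_of_real (sqrt r))^2 = complex_of_real r" using rp
      by (metis of_real_power real_sqrt_pow2 less_imp_le)
    hence "eigenvalue (linA \<epsilon> b rc \<omega>) (complex_of_real (sqrt r))"
      unfolding A using ev2 pq by metis
    moreover have "Re (complex_of_real (sqrt r)) > 0" using rp by simp
    ultimately show "\<exists>\<mu>. eigenvalue (linA \<epsilon> b rc \<omega>) \<mu> \<and> Re \<mu> > 0" by blast
  qed
  have R: "2 * pi * b / sqrt \<epsilon> * (1 + (rc / b)\<^sup>2) / sqrt (1 - (rc / b)\<^sup>2) = 2 * pi / X"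
  proof -
    have e1: "1 + (rc / b)\<^sup>2 = S / b\<^sup>2" unfolding S_def using assms by (simp add: field_simps)
    have "1 - (rc / b)\<^sup>2 = (b\<^sup>2 - rc\<^sup>2) / b\<^sup>2" using assms by (simp add: field_simps)
    hence e2: "sqrt (1 - (rc / b)\<^sup>2) = sqrt (b\<^sup>2 - rc\<^sup>2) / b" using assms
      by (simp add: real_sqrt_divide)
    have e3: "X = sqrt \<epsilon> * sqrt (b\<^sup>2 - rc\<^sup>2) / S" unfolding X_def by (simp add: real_sqrt_mult)
    have "sqrt (b\<^sup>2 - rc\<^sup>2) > 0" using bd by simp
    moreover have "sqrt \<epsilon> > 0" using assms by simp
    ultimately show ?thesis unfolding e1 e2 e3 using assms Sp by (simp add: field_simps power2_eq_square)
  qed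
  have part2: "\<omega> < X \<longleftrightarrow> 2 * pi / \<omega> > 2 * pi / X"
    using Xp assms(5) pi_gt_zero by (simp add: field_simps)
  show ?thesis using part1 rX part2 R unfolding X_def S_def by simp
qed

end
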